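(* For every permutation $w\in S_n$, $\Upsilon_w(\beta)=\Upsilon_{w^{-1}}(\beta)$.
   Context: For $w\in S_n$, $\mathfrak{G}^{(\beta)}_w$ is the $\beta$-Grothendieck polynomial: $\mathfrak{G}^{(\beta)}_{w_0}=x_1^{n-1}\cdots x_{n-1}$ for $w_0=n\cdots21$, and $\mathfrak{G}^{(\beta)}_w=\partial_i((1+\beta x_{i+1})\mathfrak{G}^{(\beta)}_{ws_i})$ when $w(i)<w(i+1)$, with $\partial_if=(f-s_if)/(x_i-x_{i+1})$. $\Upsilon_w(\beta)=\mathfrak{G}^{(\beta)}_w(1,\dots,1)$. *)

theory Defs
  imports "HOL-Library.Poly_Mapping" "HOL-Computational_Algebra.Polynomial"
          "HOL-Combinatorics.Transposition" "HOL-Combinatorics.Permutations"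
begin

text \<open>Polynomials in the variables x_1, x_2, ... (indexed by nat), with
  coefficients in Z[beta] (univariate integer polynomials in beta).
  A monomial is a finitely supported exponent vector nat =>0 nat.\<close>

type_synonym mpoly = "(nat \<Rightarrow>\<^sub>0 nat) \<Rightarrow>\<^sub>0 int poly"

definition Var :: "nat \<Rightarrow> mpoly" where
  "Var i = Poly_Mapping.single (Poly_Mapping.single i 1) 1"

definition beta :: mpoly where
  "beta = Poly_Mapping.single 0 [:0, 1:]"

definition swapvars :: "nat \<Rightarrow> mpoly \<Rightarrow> mpoly" where
  "swapvars i f =
     Poly_Mapping.map_key (Poly_Mapping.map_key (transpose i (Suc i))) f"

definition divdiff :: "nat \<Rightarrow> mpoly \<Rightarrow> mpoly" where
  "divdiff i f = (THE g. (Var i - Var (Suc i)) * g = f - swapvars i f)"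

definition w0 :: "nat \<Rightarrow> nat \<Rightarrow> nat" where
  "w0 n = (\<lambda>j. if j \<in> {1..n} then Suc n - j else j)"

inductive is_groth :: "nat \<Rightarrow> (nat \<Rightarrow> nat) \<Rightarrow> mpoly \<Rightarrow> bool" for n where
  top: "is_groth n (w0 n) (\<Prod>j\<in>{1..n}. Var j ^ (n - j))"
| step: "\<lbrakk> is_groth n (w \<circ> transpose i (Suc i)) G; 1 \<le> i; i < n; w i < w (Suc i) \<rbrakk>
         \<Longrightarrow> is_groth n w (divdiff i ((1 + beta * Var (Suc i)) * G))"

definition groth :: "nat \<Rightarrow> (nat \<Rightarrow> nat) \<Rightarrow> mpoly" where
  "groth n w = (THE G. is_groth n w G)"

text \<open>Evaluation at x_1 = x_2 = ... = 1 (sum of all coefficients), in Z[beta].\<close>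
definition eval_ones :: "mpoly \<Rightarrow> int poly" where
  "eval_ones f = (\<Sum>m\<in>Poly_Mapping.keys f. Poly_Mapping.lookup f m)"

definition Upsilon :: "nat \<Rightarrow> (nat \<Rightarrow> nat) \<Rightarrow> int poly" where
  "Upsilon n w = eval_ones (groth n w)"

end

theory Submission
  imports Defs
begin

type_synonym perm = "nat \<Rightarrow> nat"

abbreviation sw :: "nat \<Rightarrow> nat \<Rightarrow> nat" where "sw a \<equiv> transpose a (Suc a)"

definition Rop :: "'a::comm_ring_1 \<Rightarrow> nat \<Rightarrow> (perm \<Rightarrow> 'a) \<Rightarrow> perm \<Rightarrow> 'a" where
  "Rop b a F v = (if v (Suc a) < v a then F (v \<circ> sw a) + b * F v else 0)"

definition hop :: "'a::comm_ring_1 \<Rightarrow> nat \<Rightarrow> 'a \<Rightarrow> (perm \<Rightarrow> 'a) \<Rightarrow> perm \<Rightarrow> 'a" where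
  "hop b a c F = (\<lambda>v. F v + c * Rop b a F v)"

definition chain :: "(('p \<Rightarrow> 'a) \<Rightarrow> ('p \<Rightarrow> 'a)) list \<Rightarrow> ('p \<Rightarrow> 'a) \<Rightarrow> 'p \<Rightarrow> 'a" where
  "chain ops F = fold (\<lambda>op G. op G) ops F"

lemma chain_Nil[simp]: "chain [] F = F" by (simp add: chain_def)
lemma chain_Cons[simp]: "chain (op # ops) F = chain ops (op F)" by (simp add: chain_def)
lemma chain_append[simp]: "chain (xs @ ys) F = chain ys (chain xs F)" by (simp add: chain_def)

lemma sw_sw[simp]: "sw a \<circ> (sw a \<circ> X) = X"
  by (rule ext) (simp add: transpose_def)
lemma sw_sw'[simp]: "sw a \<circ> sw a = id"
  by (rule ext) (simp add: transpose_def)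
lemma sw_braid: "sw a \<circ> (sw (Suc a) \<circ> sw a) = sw (Suc a) \<circ> (sw a \<circ> sw (Suc a))"
  by (rule ext) (simp add: transpose_def)
lemma sw_far: "Suc a < c \<or> Suc c < a \<Longrightarrow> sw a \<circ> sw c = sw c \<circ> sw a"
  by (rule ext) (auto simp add: transpose_def)

lemma Rop_add: "Rop b a (\<lambda>v. F v + G v) w = Rop b a F w + Rop b a G w"
  by (simp add: Rop_def algebra_simps)
lemma Rop_smult: "Rop b a (\<lambda>v. c * F v) w = c * Rop b a F w"
  by (simp add: Rop_def algebra_simps)
lemma Rop_diff: "Rop b a (\<lambda>v. F v - G v) w = Rop b a F w - Rop b a G w"
  by (simp add: Rop_def algebra_simps)

lemma Rop_quad: "Rop b a (Rop b a F) w = b * Rop b a F w"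
  by (simp add: Rop_def transpose_def comp_def)

lemma Rop_far: assumes "Suc a < c \<or> Suc c < a"
  shows "Rop b a (Rop b c F) w = Rop b c (Rop b a F) w"
proof -
  have e: "w \<circ> sw a \<circ> sw c = w \<circ> sw c \<circ> sw a" using sw_far[OF assms] by (simp add: comp_assoc)
  show ?thesis using assms unfolding Rop_def
    by (auto simp: transpose_def e algebra_simps)
qed

lemma Rop_braid: "Rop b a (Rop b (Suc a) (Rop b a F)) w = Rop b (Suc a) (Rop b a (Rop b (Suc a) F)) w"
proof -
  have e: "w \<circ> sw a \<circ> sw (Suc a) \<circ> sw a = w \<circ> sw (Suc a) \<circ> sw a \<circ> sw (Suc a)"
    using sw_braid[of a] by (simp add: comp_assoc)
  show ?thesis unfolding Rop_def
    by (auto simp: transpose_def e algebra_simps)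
qed

lemma Rop_quadf: "Rop b a (Rop b a F) = (\<lambda>w. b * Rop b a F w)"
  by (rule ext) (rule Rop_quad)
lemma Rop_braidf: "Rop b (Suc a) (Rop b a (Rop b (Suc a) F)) = Rop b a (Rop b (Suc a) (Rop b a F))"
  by (rule ext) (rule Rop_braid[symmetric])

definition gop :: "'a::comm_ring_1 \<Rightarrow> nat \<Rightarrow> 'a \<Rightarrow> 'a \<Rightarrow> (perm \<Rightarrow> 'a) \<Rightarrow> perm \<Rightarrow> 'a" where
  "gop b a x y F = (\<lambda>v. (1 + b * y) * F v + (x - y) * Rop b a F v)"

lemma Y1: "gop b a x y (hop b a y F) v = (1 + b * y) * hop b a x F v"
  unfolding hop_def gop_def
  apply (simp only: Rop_add Rop_smult Rop_quadf)
  by (simp add: algebra_simps)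

lemma Y2: "hop b a y (gop b a x y F) v = (1 + b * y) * hop b a x F v"
  unfolding hop_def gop_def
  apply (simp only: Rop_add Rop_smult Rop_quadf)
  by (simp add: algebra_simps)

lemma Y3: "hop b (Suc j) y (hop b j x (gop b (Suc j) x y F)) v
         = gop b j x y (hop b (Suc j) x (hop b j y F)) v"
  unfolding hop_def gop_def
  apply (simp only: Rop_add Rop_smult Rop_quadf Rop_braidf)
  by (simp add: algebra_simps)

definition commute :: "(('p \<Rightarrow> 'a) \<Rightarrow> ('p \<Rightarrow> 'a)) \<Rightarrow> (('p \<Rightarrow> 'a) \<Rightarrow> ('p \<Rightarrow> 'a)) \<Rightarrow> bool" where
  "commute o1 o2 \<longleftrightarrow> (\<forall>F. o1 (o2 F) = o2 (o1 F))"

lemma hop_far: "Suc a < c \<or> Suc c < a \<Longrightarrow> commute (hop b a x) (hop b c y)"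
  unfolding commute_def
  by (auto simp: hop_def fun_eq_iff Rop_add Rop_smult Rop_far[of a c] algebra_simps)

lemma chain_snoc_commute:
  "(\<forall>o'\<in>set X. commute op o') \<Longrightarrow> chain (X @ [op]) F = chain (op # X) F"
proof (induction X arbitrary: F)
  case Nil then show ?case by simp
next
  case (Cons o1 X)
  have "chain ((o1 # X) @ [op]) F = chain (X @ [op]) (o1 F)" by simp
  also have "\<dots> = chain (op # X) (o1 F)" using Cons by simp
  also have "\<dots> = chain X (o1 (op F))" using Cons.prems by (simp add: commute_def)
  finally show ?case by simp
qed

lemma chain_mid_commute:
  "(\<forall>o'\<in>set X. commute op o') \<Longrightarrow> chain (X @ op # Y) F = chain (X @ Y) (op F)"
proof -
  assume a: "\<forall>o'\<in>set X. commute op o'"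
  have "chain (X @ op # Y) F = chain Y (chain (X @ [op]) F)"
    by (metis append.assoc append_Cons append_Nil chain_append)
  also have "\<dots> = chain Y (chain (op # X) F)" using chain_snoc_commute[OF a] by simp
  finally show ?thesis by simp
qed

lemma chain_blocks_commute:
  "(\<forall>o1\<in>set X. \<forall>o2\<in>set Y. commute o2 o1) \<Longrightarrow> chain (X @ Y) F = chain (Y @ X) F"
proof (induction Y arbitrary: F)
  case Nil then show ?case by simp
next
  case (Cons y Y)
  have "chain (X @ y # Y) F = chain (X @ Y) (y F)"
    using Cons.prems by (intro chain_mid_commute) auto
  also have "\<dots> = chain (Y @ X) (y F)" using Cons by auto
  finally show ?case by simp
qed

definition Xw :: "'a::comm_ring_1 \<Rightarrow> nat \<Rightarrow> nat \<Rightarrow> 'a \<Rightarrow> ((perm \<Rightarrow> 'a) \<Rightarrow> (perm \<Rightarrow> 'a)) list" where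
  "Xw b i j x = map (\<lambda>a. hop b a x) (rev [i..<j])"

lemma Xw_empty[simp]: "j \<le> i \<Longrightarrow> Xw b i j x = []"
  by (simp add: Xw_def)
lemma Xw_Suc: "i \<le> j \<Longrightarrow> Xw b i (Suc j) x = hop b j x # Xw b i j x"
  by (simp add: Xw_def)

lemma Xw_commute: "\<forall>o'\<in>set (Xw b i j x). commute (hop b (Suc j) y) o'"
  unfolding Xw_def using hop_far by (auto simp: hop_far)

lemma train:
  assumes "i \<le> j"
  shows "chain (gop b j x y # Xw b i j x @ Xw b i (Suc j) y) F v
       = (1 + b * y) * chain (Xw b i j y @ Xw b i (Suc j) x) F v"
  using assms
proof (induction j arbitrary: F rule: dec_induct)
  case base
  then show ?case by (simp add: Xw_Suc Y2)
next
  case (step j)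
  have e3: "hop b (Suc j) y (hop b j x (gop b (Suc j) x y F)) = gop b j x y (hop b (Suc j) x (hop b j y F))"
    by (rule ext) (rule Y3)
  have "chain (gop b (Suc j) x y # Xw b i (Suc j) x @ Xw b i (Suc (Suc j)) y) F v
      = chain (Xw b i j x @ hop b (Suc j) y # Xw b i (Suc j) y) (hop b j x (gop b (Suc j) x y F)) v"
    using step.hyps by (simp add: Xw_Suc)
  also have "\<dots> = chain (Xw b i j x @ Xw b i (Suc j) y) (hop b (Suc j) y (hop b j x (gop b (Suc j) x y F))) v"
    by (subst chain_mid_commute[OF Xw_commute]) simp
  also have "\<dots> = chain (gop b j x y # Xw b i j x @ Xw b i (Suc j) y) (hop b (Suc j) x (hop b j y F)) v"
    by (simp add: e3)
  also have "\<dots> = (1 + b * y) * chain (Xw b i j y @ Xw b i (Suc j) x) (hop b (Suc j) x (hop b j y F)) v"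
    by (rule step.IH)
  also have "chain (Xw b i j y @ Xw b i (Suc j) x) (hop b (Suc j) x (hop b j y F))
      = chain (Xw b i j y @ hop b (Suc j) x # Xw b i (Suc j) x) (hop b j y F)"
    by (subst chain_mid_commute[OF Xw_commute]) simp
  also have "\<dots> = chain (Xw b i (Suc j) y @ Xw b i (Suc (Suc j)) x) F"
    using step.hyps by (simp add: Xw_Suc)
  finally show ?case .
qed

definition linop :: "((perm \<Rightarrow> 'a::comm_ring_1) \<Rightarrow> (perm \<Rightarrow> 'a)) \<Rightarrow> bool" where
  "linop op \<longleftrightarrow> (\<forall>c G. op (\<lambda>v. c * G v) = (\<lambda>v. c * op G v))"

lemma linop_hop: "linop (hop b a x)"
  unfolding linop_def hop_def by (auto simp: fun_eq_iff Rop_smult algebra_simps)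

lemma chain_smult: "\<forall>op\<in>set ops. linop op \<Longrightarrow> chain ops (\<lambda>v. c * G v) v = c * chain ops G v"
proof (induction ops arbitrary: G)
  case Nil then show ?case by simp
next
  case (Cons op ops)
  then have "op (\<lambda>v. c * G v) = (\<lambda>v. c * op G v)" by (simp add: linop_def)
  then show ?case using Cons by simp
qed

lemma linop_Xw: "\<forall>op\<in>set (Xw b i j x). linop op"
  by (auto simp: Xw_def linop_hop)

lemma sym_scaled:
  "(1 + b * y) * chain (Xw b i j x @ Xw b i j y) F v = (1 + b * y) * chain (Xw b i j y @ Xw b i j x) F v"
proof (cases "i < j")
  case False then show ?thesis by simp
next
  case True
  then obtain m where m: "j = Suc m" "i \<le> m" by (cases j) auto
  have e1: "(\<lambda>v. (1 + b * y) * hop b m x F v) = gop b m x y (hop b m y F)"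
    by (rule ext) (rule Y1[symmetric])
  have "(1 + b * y) * chain (Xw b i j x @ Xw b i j y) F v
      = (1 + b * y) * chain (Xw b i m x @ Xw b i (Suc m) y) (hop b m x F) v"
    using m by (simp add: Xw_Suc)
  also have "\<dots> = chain (Xw b i m x @ Xw b i (Suc m) y) (\<lambda>v. (1 + b * y) * hop b m x F v) v"
    by (rule chain_smult[symmetric]) (auto simp: linop_Xw)
  also have "\<dots> = chain (gop b m x y # Xw b i m x @ Xw b i (Suc m) y) (hop b m y F) v"
    by (simp add: e1)
  also have "\<dots> = (1 + b * y) * chain (Xw b i m y @ Xw b i (Suc m) x) (hop b m y F) v"
    by (rule train[OF m(2)])
  also have "\<dots> = (1 + b * y) * chain (Xw b i j y @ Xw b i j x) F v"
    using m by (simp add: Xw_Suc)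
  finally show ?thesis .
qed

lemma pm_induct:
  fixes P :: "('a \<Rightarrow>\<^sub>0 'b::monoid_add) \<Rightarrow> bool"
  assumes "P 0" and "\<And>f a c. P f \<Longrightarrow> P (f + Poly_Mapping.single a c)"
  shows "P f"
proof (induction f rule: Poly_Mapping.update_induct)
  case const then show ?case by (rule assms(1))
next
  case (update f a b)
  have "Poly_Mapping.update a b f = f + Poly_Mapping.single a b"
    using update.hyps(1)
    by (intro poly_mapping_eqI) (auto simp: Poly_Mapping.lookup_update lookup_add lookup_single when_def in_keys_iff)
  then show ?case using assms(2)[OF update.IH] by simp
qed

definition sig :: "nat \<Rightarrow> (nat \<Rightarrow>\<^sub>0 nat) \<Rightarrow> (nat \<Rightarrow>\<^sub>0 nat)" where
  "sig i = Poly_Mapping.map_key (transpose i (Suc i))"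

lemma inj_transpose': "inj (transpose a b)"
  by (simp add: inj_on_def transpose_def) 

lemma sig_sig[simp]: "sig i (sig i m) = m"
proof -
  have "sig i (sig i m) = Poly_Mapping.map_key (transpose i (Suc i) \<circ> transpose i (Suc i)) m"
    unfolding sig_def by (rule map_key_compose) (auto simp: inj_transpose')
  also have "transpose i (Suc i) \<circ> transpose i (Suc i) = (\<lambda>x. x)"
    by (rule ext) (simp add: transpose_def)
  finally show ?thesis by (simp add: map_key_id)
qed

lemma inj_sig: "inj (sig i)"
  by (metis injI sig_sig)

lemma sig_add: "sig i (m1 + m2) = sig i m1 + sig i m2"
  unfolding sig_def by (rule map_key_plus) (simp add: inj_transpose')

lemma lookup_swapvars: "Poly_Mapping.lookup (swapvars i f) m = Poly_Mapping.lookup f (sig i m)"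
proof -
  have "swapvars i f = Poly_Mapping.map_key (sig i) f" by (simp add: swapvars_def sig_def)
  moreover have "Poly_Mapping.lookup (Poly_Mapping.map_key (sig i) f) = Poly_Mapping.lookup f \<circ> sig i"
    by (rule map_key.rep_eq[OF inj_sig])
  ultimately show ?thesis by simp
qed

lemma swapvars_add[simp]: "swapvars i (f + g) = swapvars i f + swapvars i g"
  by (rule poly_mapping_eqI) (simp add: lookup_swapvars lookup_add)
lemma swapvars_zero[simp]: "swapvars i 0 = 0"
  by (rule poly_mapping_eqI) (simp add: lookup_swapvars)
lemma swapvars_minus[simp]: "swapvars i (f - g) = swapvars i f - swapvars i g"
  by (rule poly_mapping_eqI) (simp add: lookup_swapvars lookup_minus)
lemma swapvars_single: "swapvars i (Poly_Mapping.single m c) = Poly_Mapping.single (sig i m) c"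
  by (rule poly_mapping_eqI) (auto simp: lookup_swapvars lookup_single when_def)

lemma swapvars_mult_single:
  "swapvars i (Poly_Mapping.single a c * Poly_Mapping.single d e)
   = swapvars i (Poly_Mapping.single a c) * swapvars i (Poly_Mapping.single d e)"
  by (simp add: mult_single swapvars_single sig_add)

lemma swapvars_mult[simp]: "swapvars i (f * g) = swapvars i f * swapvars i g"
proof (induction f rule: pm_induct)
  case 1 then show ?case by simp
next
  case (2 f a c)
  have "swapvars i (Poly_Mapping.single a c * g) = swapvars i (Poly_Mapping.single a c) * swapvars i g"
  proof (induction g rule: pm_induct)
    case 1 then show ?case by simp
  next
    case (2 g d e)
    then show ?case by (simp add: distrib_left swapvars_mult_single)
  qed
  then show ?case using 2 by (simp add: distrib_right)
qed

lemma swapvars_one[simp]: "swapvars i 1 = 1"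
proof -
  have "sig i 0 = 0" unfolding sig_def
    by (rule poly_mapping_eqI) (simp add: map_key.rep_eq[OF inj_transpose'])
  then show ?thesis by (metis single_one swapvars_single)
qed

lemma swapvars_beta[simp]: "swapvars i beta = beta"
proof -
  have "sig i 0 = 0" unfolding sig_def
    by (rule poly_mapping_eqI) (simp add: map_key.rep_eq[OF inj_transpose'])
  then show ?thesis by (simp add: beta_def swapvars_single)
qed

lemma sig_single: "sig i (Poly_Mapping.single j 1) = Poly_Mapping.single (transpose i (Suc i) j) 1"
  unfolding sig_def
  by (rule poly_mapping_eqI) (auto simp: map_key.rep_eq[OF inj_transpose'] lookup_single when_def transpose_def)

lemma swapvars_Var[simp]: "swapvars i (Var j) = Var (transpose i (Suc i) j)"
  unfolding Var_def swapvars_single sig_single by simp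

lemma swapvars_swapvars[simp]: "swapvars i (swapvars i f) = f"
  by (rule poly_mapping_eqI) (simp add: lookup_swapvars)

lemma eval_ones_superset:
  assumes "finite K" "Poly_Mapping.keys f \<subseteq> K"
  shows "eval_ones f = (\<Sum>m\<in>K. Poly_Mapping.lookup f m)"
  unfolding eval_ones_def
  by (rule sum.mono_neutral_left) (use assms in \<open>auto simp: in_keys_iff\<close>)

lemma eval_ones_add[simp]: "eval_ones (f + g) = eval_ones f + eval_ones g"
proof -
  let ?K = "Poly_Mapping.keys f \<union> Poly_Mapping.keys g"
  have "eval_ones (f + g) = (\<Sum>m\<in>?K. Poly_Mapping.lookup (f + g) m)"
    by (rule eval_ones_superset) (auto simp: keys_add)
  also have "\<dots> = (\<Sum>m\<in>?K. Poly_Mapping.lookup f m) + (\<Sum>m\<in>?K. Poly_Mapping.lookup g m)"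
    by (simp add: lookup_add sum.distrib)
  also have "\<dots> = eval_ones f + eval_ones g"
    by (simp add: eval_ones_superset[symmetric])
  finally show ?thesis .
qed

lemma eval_ones_zero[simp]: "eval_ones 0 = 0"
  by (simp add: eval_ones_def)

lemma eval_ones_single[simp]: "eval_ones (Poly_Mapping.single m c) = c"
  by (simp add: eval_ones_def)

lemma eval_ones_mult[simp]: "eval_ones (f * g) = eval_ones f * eval_ones g"
proof (induction f rule: pm_induct)
  case 1 then show ?case by simp
next
  case (2 f a c)
  have "eval_ones (Poly_Mapping.single a c * g) = c * eval_ones g"
  proof (induction g rule: pm_induct)
    case 1 then show ?case by simp
  next
    case (2 g d e)
    then show ?case by (simp add: distrib_left mult_single)
  qed
  then show ?case using 2 by (simp add: distrib_right)
qed

lemma eval_ones_one[simp]: "eval_ones 1 = 1"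
  by (metis single_one eval_ones_single)
lemma eval_ones_uminus[simp]: "eval_ones (- f) = - eval_ones f"
  by (metis add_eq_0_iff eval_ones_add eval_ones_zero neg_eq_iff_add_eq_0)
lemma eval_ones_minus[simp]: "eval_ones (f - g) = eval_ones f - eval_ones g"
  by (metis diff_conv_add_uminus eval_ones_add eval_ones_uminus)
lemma eval_ones_beta[simp]: "eval_ones beta = [:0, 1:]"
  by (simp add: beta_def)
lemma eval_ones_Var[simp]: "eval_ones (Var j) = 1"
  by (simp add: Var_def)

lemma single_nz: "Poly_Mapping.single j (Suc 0) \<noteq> 0"
  by (metis lookup_single_eq lookup_zero nat.distinct(1))
lemma single_ne: "Poly_Mapping.single (Suc i) (Suc 0) \<noteq> Poly_Mapping.single i (Suc 0)"
  by (metis lookup_single_eq lookup_single_not_eq n_not_Suc_n nat.distinct(1))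

lemma one_beta_Var_nz: "1 + beta * Var j \<noteq> 0"
proof
  assume "1 + beta * Var j = 0"
  then have "Poly_Mapping.lookup (1 + beta * Var j) 0 = 0" by simp
  moreover have "Poly_Mapping.lookup (1 + beta * Var j) 0 = 1"
    by (simp add: beta_def Var_def mult_single lookup_add lookup_single when_def single_nz)
  ultimately show False by simp
qed

lemma Var_diff_nz: "Var i - Var (Suc i) \<noteq> (0::mpoly)"
proof
  assume "Var i - Var (Suc i) = (0::mpoly)"
  then have "Poly_Mapping.lookup (Var i - Var (Suc i)) (Poly_Mapping.single i 1) = 0" by simp
  moreover have "Poly_Mapping.lookup (Var i - Var (Suc i)) (Poly_Mapping.single i 1) = 1"
    by (simp add: Var_def lookup_minus lookup_single when_def single_ne)
  ultimately show False by simp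
qed

lemma divdiff_eqI:
  assumes "(Var i - Var (Suc i)) * g = f - swapvars i f"
  shows "divdiff i f = g"
  unfolding divdiff_def
proof (rule the_equality)
  fix g' assume "(Var i - Var (Suc i)) * g' = f - swapvars i f"
  with assms have "(Var i - Var (Suc i)) * g' = (Var i - Var (Suc i)) * g" by simp
  then show "g' = g" using Var_diff_nz by simp
qed (rule assms)

definition is_hom :: "('a::comm_ring_1 \<Rightarrow> 'c::comm_ring_1) \<Rightarrow> bool" where
  "is_hom \<phi> \<longleftrightarrow> \<phi> 0 = 0 \<and> \<phi> 1 = 1 \<and> (\<forall>x y. \<phi> (x + y) = \<phi> x + \<phi> y) \<and> (\<forall>x y. \<phi> (x * y) = \<phi> x * \<phi> y)"

lemma hom_Rop: "is_hom \<phi> \<Longrightarrow> \<phi> (Rop b a F v) = Rop (\<phi> b) a (\<phi> \<circ> F) v"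
  by (simp add: is_hom_def Rop_def)

lemma hom_hop: "is_hom \<phi> \<Longrightarrow> \<phi> \<circ> hop b a c F = hop (\<phi> b) a (\<phi> c) (\<phi> \<circ> F)"
  by (rule ext) (simp add: hop_def hom_Rop is_hom_def)

definition hopsl :: "'a::comm_ring_1 \<Rightarrow> (nat \<times> 'a) list \<Rightarrow> ((perm \<Rightarrow> 'a) \<Rightarrow> (perm \<Rightarrow> 'a)) list" where
  "hopsl b ws = map (\<lambda>(a, c). hop b a c) ws"

lemma hopsl_append[simp]: "hopsl b (xs @ ys) = hopsl b xs @ hopsl b ys"
  by (simp add: hopsl_def)
lemma hopsl_Cons[simp]: "hopsl b ((a, c) # ys) = hop b a c # hopsl b ys"
  by (simp add: hopsl_def)
lemma hopsl_Nil[simp]: "hopsl b [] = []"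
  by (simp add: hopsl_def)

lemma hom_chain:
  assumes "is_hom \<phi>"
  shows "\<phi> (chain (hopsl b ws) F v) = chain (hopsl (\<phi> b) (map (\<lambda>(a, c). (a, \<phi> c)) ws)) (\<phi> \<circ> F) v"
proof (induction ws arbitrary: F)
  case Nil then show ?case by simp
next
  case (Cons p ws)
  obtain a c where p: "p = (a, c)" by (cases p)
  have "\<phi> (chain (hopsl b (p # ws)) F v) = \<phi> (chain (hopsl b ws) (hop b a c F) v)" by (simp add: p)
  also have "\<dots> = chain (hopsl (\<phi> b) (map (\<lambda>(a, c). (a, \<phi> c)) ws)) (\<phi> \<circ> hop b a c F) v"
    by (rule Cons.IH)
  also have "\<dots> = chain (hopsl (\<phi> b) (map (\<lambda>(a, c). (a, \<phi> c)) ws)) (hop (\<phi> b) a (\<phi> c) (\<phi> \<circ> F)) v"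
    by (simp only: hom_hop[OF assms])
  also have "\<dots> = chain (hopsl (\<phi> b) (map (\<lambda>(a, c). (a, \<phi> c)) (p # ws))) (\<phi> \<circ> F) v"
    by (simp add: p)
  finally show ?case .
qed

definition rowp :: "nat \<Rightarrow> (nat \<Rightarrow> 'a) \<Rightarrow> nat \<Rightarrow> (nat \<times> 'a) list" where
  "rowp n x r = map (\<lambda>a. (a, x r)) (rev [r..<n])"

definition Gp :: "nat \<Rightarrow> (nat \<Rightarrow> 'a) \<Rightarrow> (nat \<times> 'a) list" where
  "Gp n x = concat (map (rowp n x) [1..<Suc n])"

definition delta :: "perm \<Rightarrow> 'a::comm_ring_1" where
  "delta v = (if v = id then 1 else 0)"

definition Gf :: "'a::comm_ring_1 \<Rightarrow> nat \<Rightarrow> (nat \<Rightarrow> 'a) \<Rightarrow> perm \<Rightarrow> 'a" where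
  "Gf b n x = chain (hopsl b (Gp n x)) delta"

lemma hom_delta: "is_hom \<phi> \<Longrightarrow> \<phi> \<circ> delta = delta"
  by (rule ext) (simp add: delta_def is_hom_def)

lemma map_rowp: "map (\<lambda>(a, c). (a, \<phi> c)) (rowp n x r) = rowp n (\<phi> \<circ> x) r"
  by (simp add: rowp_def)

lemma map_Gp: "map (\<lambda>(a, c). (a, \<phi> c)) (Gp n x) = Gp n (\<phi> \<circ> x)"
  by (simp add: Gp_def map_concat map_rowp comp_def)

lemma hom_Gf: "is_hom \<phi> \<Longrightarrow> \<phi> (Gf b n x v) = Gf (\<phi> b) n (\<phi> \<circ> x) v"
  unfolding Gf_def hom_chain[of \<phi> b "Gp n x" delta] map_Gp hom_delta by simp

lemma hopsl_rowp: "hopsl b (rowp n x r) = Xw b r n (x r)"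
  by (simp add: hopsl_def rowp_def Xw_def)

lemma upt_split3: "1 \<le> i \<Longrightarrow> i < n \<Longrightarrow> [1..<Suc n] = [1..<i] @ i # Suc i # [Suc (Suc i)..<Suc n]"
proof -
  assume "1 \<le> i" "i < n"
  then have "[1..<Suc n] = [1..<i] @ [i..<Suc n]" using upt_add_eq_append[of 1 i "Suc n - i"] by simp
  also have "[i..<Suc n] = i # Suc i # [Suc (Suc i)..<Suc n]" using \<open>i < n\<close> by (simp add: upt_rec)
  finally show ?thesis .
qed

lemma Gp_split:
  assumes "1 \<le> i" "i < n"
  shows "hopsl b (Gp n x) = hopsl b (concat (map (rowp n x) [1..<i])) @ Xw b i n (x i) @ Xw b (Suc i) n (x (Suc i))
           @ hopsl b (concat (map (rowp n x) [Suc (Suc i)..<Suc n]))"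
  unfolding Gp_def upt_split3[OF assms]
  by (simp add: hopsl_rowp)

lemma Q_commute:
  "\<forall>o'\<in>set (hopsl b (concat (map (rowp n x) [Suc (Suc i)..<Suc n]))). commute (hop b i y) o'"
  by (auto simp: hopsl_def rowp_def intro!: hop_far)

lemma Xw_snoc: "i < n \<Longrightarrow> Xw b (Suc i) n y @ [hop b i y] = Xw b i n y"
  by (simp add: Xw_def upt_rec)

lemma Gp_shift_form:
  assumes "1 \<le> i" "i < n"
  shows "chain (hopsl b (Gp n x) @ [hop b i (x (Suc i))]) F
       = chain (hopsl b (concat (map (rowp n x) [Suc (Suc i)..<Suc n])))
           (chain (Xw b i n (x i) @ Xw b i n (x (Suc i))) (chain (hopsl b (concat (map (rowp n x) [1..<i]))) F))"
proof -
  let ?P = "hopsl b (concat (map (rowp n x) [1..<i]))"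
  let ?Q = "hopsl b (concat (map (rowp n x) [Suc (Suc i)..<Suc n]))"
  have "chain (hopsl b (Gp n x) @ [hop b i (x (Suc i))]) F
      = hop b i (x (Suc i)) (chain ?Q (chain (Xw b (Suc i) n (x (Suc i))) (chain (Xw b i n (x i)) (chain ?P F))))"
    by (simp add: Gp_split[OF assms])
  also have "\<dots> = chain (?Q @ [hop b i (x (Suc i))]) (chain (Xw b (Suc i) n (x (Suc i))) (chain (Xw b i n (x i)) (chain ?P F)))"
    by simp
  also have "\<dots> = chain (hop b i (x (Suc i)) # ?Q) (chain (Xw b (Suc i) n (x (Suc i))) (chain (Xw b i n (x i)) (chain ?P F)))"
    by (rule chain_snoc_commute[OF Q_commute])
  also have "\<dots> = chain ?Q (chain (Xw b (Suc i) n (x (Suc i)) @ [hop b i (x (Suc i))]) (chain (Xw b i n (x i)) (chain ?P F)))"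
    by simp
  also have "\<dots> = chain ?Q (chain (Xw b i n (x i) @ Xw b i n (x (Suc i))) (chain ?P F))"
    by (simp add: Xw_snoc[OF assms(2)])
  finally show ?thesis .
qed

lemma linop_hopsl: "\<forall>op\<in>set (hopsl b ws). linop op"
  by (auto simp: hopsl_def linop_hop)

lemma Gp_sym_scaled:
  fixes x :: "nat \<Rightarrow> 'a::comm_ring_1"
  assumes "1 \<le> i" "i < n"
  defines "x' \<equiv> x \<circ> transpose i (Suc i)"
  shows "(1 + b * x (Suc i)) * chain (hopsl b (Gp n x) @ [hop b i (x (Suc i))]) F v
       = (1 + b * x (Suc i)) * chain (hopsl b (Gp n x') @ [hop b i (x' (Suc i))]) F v"
proof -
  let ?P = "hopsl b (concat (map (rowp n x) [1..<i]))"
  let ?Q = "hopsl b (concat (map (rowp n x) [Suc (Suc i)..<Suc n]))"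
  have P': "map (rowp n x') [1..<i] = map (rowp n x) [1..<i]"
    by (rule map_cong) (auto simp: rowp_def x'_def transpose_def)
  have Q': "map (rowp n x') [Suc (Suc i)..<Suc n] = map (rowp n x) [Suc (Suc i)..<Suc n]"
    by (rule map_cong) (auto simp: rowp_def x'_def transpose_def)
  have xi: "x' i = x (Suc i)" "x' (Suc i) = x i" by (auto simp: x'_def transpose_def)
  let ?y = "x (Suc i)"
  let ?A = "chain (Xw b i n (x i) @ Xw b i n ?y) (chain ?P F)"
  let ?A' = "chain (Xw b i n ?y @ Xw b i n (x i)) (chain ?P F)"
  have AA: "(\<lambda>v. (1 + b * ?y) * ?A v) = (\<lambda>v. (1 + b * ?y) * ?A' v)"
    by (rule ext) (rule sym_scaled)
  have "(1 + b * ?y) * chain (hopsl b (Gp n x) @ [hop b i ?y]) F v = (1 + b * ?y) * chain ?Q ?A v"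
    by (simp only: Gp_shift_form[OF assms(1,2)])
  also have "\<dots> = chain ?Q (\<lambda>v. (1 + b * ?y) * ?A v) v"
    by (rule chain_smult[symmetric, OF linop_hopsl])
  also have "\<dots> = chain ?Q (\<lambda>v. (1 + b * ?y) * ?A' v) v"
    by (simp only: AA)
  also have "\<dots> = (1 + b * ?y) * chain ?Q ?A' v"
    by (rule chain_smult[OF linop_hopsl])
  also have "\<dots> = (1 + b * ?y) * chain (hopsl b (Gp n x') @ [hop b i (x' (Suc i))]) F v"
    unfolding Gp_shift_form[OF assms(1,2), of b x' F] unfolding P' Q' xi ..
  finally show ?thesis .
qed

abbreviation GG :: "nat \<Rightarrow> perm \<Rightarrow> mpoly" where
  "GG n \<equiv> Gf beta n Var"

lemma is_hom_swapvars: "is_hom (swapvars i)"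
  by (simp add: is_hom_def)

lemma is_hom_eval_ones: "is_hom eval_ones"
  by (simp add: is_hom_def)

lemma sym_G':
  assumes "1 \<le> i" "i < n"
  shows "swapvars i (hop beta i (Var (Suc i)) (GG n) v) = hop beta i (Var (Suc i)) (GG n) v"
proof -
  let ?x' = "Var \<circ> transpose i (Suc i)"
  have e1: "hop beta i (Var (Suc i)) (GG n) = chain (hopsl beta (Gp n Var @ [(i, Var (Suc i))])) delta"
    by (simp add: Gf_def)
  have m: "map (\<lambda>(a, c). (a, swapvars i c)) (Gp n Var @ [(i, Var (Suc i))]) = Gp n ?x' @ [(i, ?x' (Suc i))]"
  proof -
    have "swapvars i \<circ> Var = ?x'" by (rule ext) simp
    then show ?thesis by (simp add: map_Gp transpose_def)
  qed
  have "swapvars i (hop beta i (Var (Suc i)) (GG n) v)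
      = chain (hopsl beta (Gp n ?x' @ [(i, ?x' (Suc i))])) (swapvars i \<circ> delta) v"
    unfolding e1 hom_chain[OF is_hom_swapvars] m by simp
  also have "\<dots> = chain (hopsl beta (Gp n ?x') @ [hop beta i (?x' (Suc i))]) delta v"
    by (simp add: hom_delta[OF is_hom_swapvars])
  finally have s: "swapvars i (hop beta i (Var (Suc i)) (GG n) v)
      = chain (hopsl beta (Gp n ?x') @ [hop beta i (?x' (Suc i))]) delta v" .
  have o: "hop beta i (Var (Suc i)) (GG n) v = chain (hopsl beta (Gp n Var) @ [hop beta i (Var (Suc i))]) delta v"
    by (simp add: Gf_def)
  have "(1 + beta * Var (Suc i)) * chain (hopsl beta (Gp n Var) @ [hop beta i (Var (Suc i))]) delta v
      = (1 + beta * Var (Suc i)) * chain (hopsl beta (Gp n ?x') @ [hop beta i (?x' (Suc i))]) delta v"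
    by (rule Gp_sym_scaled[OF assms, of beta Var])
  then have "chain (hopsl beta (Gp n Var) @ [hop beta i (Var (Suc i))]) delta v
      = chain (hopsl beta (Gp n ?x') @ [hop beta i (?x' (Suc i))]) delta v"
    using one_beta_Var_nz by simp
  then show ?thesis using s o by simp
qed

lemma GG_rec:
  assumes "1 \<le> i" "i < n" "w i < w (Suc i)"
  shows "divdiff i ((1 + beta * Var (Suc i)) * GG n (w \<circ> transpose i (Suc i))) = GG n w"
proof -
  let ?G' = "hop beta i (Var (Suc i)) (GG n)"
  let ?ws = "w \<circ> transpose i (Suc i)"
  have E: "?G' w = GG n w"
    using assms(3) by (simp add: hop_def Rop_def)
  have ws: "?ws \<circ> transpose i (Suc i) = w" by (rule ext) (simp add: transpose_def)
  have T: "?G' ?ws = GG n ?ws + Var (Suc i) * (GG n w + beta * GG n ?ws)"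
    using assms(3) by (simp add: hop_def Rop_def ws transpose_def)
  let ?f = "(1 + beta * Var (Suc i)) * GG n ?ws"
  have f: "?f = ?G' ?ws - Var (Suc i) * ?G' w"
    using T E by (simp add: algebra_simps)
  have sf: "swapvars i ?f = ?G' ?ws - Var i * ?G' w"
  proof -
    have s1: "swapvars i (?G' ?ws) = ?G' ?ws" by (rule sym_G'[OF assms(1,2)])
    have s2: "swapvars i (?G' w) = ?G' w" by (rule sym_G'[OF assms(1,2)])
    show ?thesis unfolding f swapvars_minus swapvars_mult s1 s2 swapvars_Var by (simp add: transpose_def)
  qed
  have "?f - swapvars i ?f = (?G' ?ws - Var (Suc i) * ?G' w) - (?G' ?ws - Var i * ?G' w)"
    by (simp only: sf) (simp only: f)
  also have "\<dots> = (Var i - Var (Suc i)) * ?G' w" by (simp only: algebra_simps)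
  also have "\<dots> = (Var i - Var (Suc i)) * GG n w" by (simp only: E)
  finally show ?thesis
    by (intro divdiff_eqI) simp
qed

definition Inv :: "nat \<Rightarrow> perm \<Rightarrow> (nat \<times> nat) set" where
  "Inv n v = {(p, q). 1 \<le> p \<and> p < q \<and> q \<le> n \<and> v q < v p}"

definition invs :: "nat \<Rightarrow> perm \<Rightarrow> nat" where
  "invs n v = card (Inv n v)"

lemma Inv_sub: "Inv n v \<subseteq> {1..n} \<times> {1..n}"
  by (auto simp: Inv_def)

lemma finite_Inv[simp]: "finite (Inv n v)"
  by (rule finite_subset[OF Inv_sub]) simp

lemma invs_le: "invs n v \<le> card ({1..n} \<times> {1..n})"
  unfolding invs_def by (rule card_mono[OF _ Inv_sub]) simp

lemma invs_id[simp]: "invs n id = 0"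
proof -
  have "Inv n id = {}" by (auto simp: Inv_def)
  then show ?thesis by (simp add: invs_def)
qed
lemma invs_id'[simp]: "invs n (\<lambda>a. a) = 0"
  using invs_id by (simp add: id_def)

lemma transpose_mono:
  assumes "p < q" "(p, q) \<noteq> (a, Suc a)"
  shows "transpose a (Suc a) p < transpose a (Suc a) q"
  using assms by (auto simp: transpose_def)

lemma sw_ge1: "1 \<le> a \<Longrightarrow> 1 \<le> p \<Longrightarrow> 1 \<le> sw a p"
  by (simp add: transpose_def)
lemma sw_len: "Suc a \<le> n \<Longrightarrow> q \<le> n \<Longrightarrow> sw a q \<le> n"
  by (simp add: transpose_def)
lemma sw_inv[simp]: "sw a (sw a p) = p"
  by (simp add: transpose_def)
lemma sw_pair_ne: "p < q \<Longrightarrow> (sw a p, sw a q) \<noteq> (a, Suc a)"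
  by (auto simp: transpose_def split: if_splits)

lemma Inv_step:
  assumes a: "1 \<le> a" "Suc a \<le> n" and d: "v (Suc a) < v a"
  shows "Inv n (v \<circ> sw a) = (\<lambda>(p, q). (sw a p, sw a q)) ` (Inv n v - {(a, Suc a)})"
proof (intro set_eqI iffI)
  fix z assume z: "z \<in> Inv n (v \<circ> sw a)"
  obtain p q where pq: "z = (p, q)" by (cases z)
  have h: "1 \<le> p" "p < q" "q \<le> n" "v (sw a q) < v (sw a p)" using z pq by (auto simp: Inv_def)
  have ne: "(p, q) \<noteq> (a, Suc a)"
  proof
    assume "(p, q) = (a, Suc a)"
    then have "sw a q = a" "sw a p = Suc a" by (auto simp: transpose_def)
    then show False using h(4) d by simp
  qed
  have m: "sw a p < sw a q" by (rule transpose_mono[OF h(2) ne])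
  have "(sw a p, sw a q) \<in> Inv n v"
    unfolding Inv_def using m sw_ge1[OF a(1) h(1)] sw_len[OF a(2) h(3)] h(4) by simp
  moreover have "(sw a p, sw a q) \<noteq> (a, Suc a)" by (rule sw_pair_ne[OF h(2)])
  moreover have "z = (\<lambda>(p, q). (sw a p, sw a q)) (sw a p, sw a q)" using pq by simp
  ultimately show "z \<in> (\<lambda>(p, q). (sw a p, sw a q)) ` (Inv n v - {(a, Suc a)})" by blast
next
  fix z assume "z \<in> (\<lambda>(p, q). (sw a p, sw a q)) ` (Inv n v - {(a, Suc a)})"
  then obtain p q where pq: "z = (sw a p, sw a q)" and h: "(p, q) \<in> Inv n v" "(p, q) \<noteq> (a, Suc a)" by auto
  have h2: "1 \<le> p" "p < q" "q \<le> n" "v q < v p" using h by (auto simp: Inv_def)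
  have m: "sw a p < sw a q" by (rule transpose_mono[OF h2(2) h(2)])
  show "z \<in> Inv n (v \<circ> sw a)"
    unfolding pq Inv_def using m sw_ge1[OF a(1) h2(1)] sw_len[OF a(2) h2(3)] h2(4) by simp
qed

lemma invs_step:
  assumes a: "1 \<le> a" "Suc a \<le> n" and d: "v (Suc a) < v a"
  shows "invs n (v \<circ> sw a) + 1 = invs n v"
proof -
  have inj: "inj_on (\<lambda>(p, q). (sw a p, sw a q)) (Inv n v - {(a, Suc a)})"
  proof (rule inj_onI)
    fix x y assume "(\<lambda>(p, q). (sw a p, sw a q)) x = (\<lambda>(p, q). (sw a p, sw a q)) y"
    then have "(\<lambda>(p, q). (sw a p, sw a q)) ((\<lambda>(p, q). (sw a p, sw a q)) x)
             = (\<lambda>(p, q). (sw a p, sw a q)) ((\<lambda>(p, q). (sw a p, sw a q)) y)" by simp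
    then show "x = y" by (cases x, cases y) simp
  qed
  have mem: "(a, Suc a) \<in> Inv n v" using a d by (simp add: Inv_def)
  have "invs n (v \<circ> sw a) = card (Inv n v - {(a, Suc a)})"
    unfolding invs_def Inv_step[OF a d] by (rule card_image[OF inj])
  also have "\<dots> = invs n v - 1" using mem by (simp add: invs_def)
  finally have e: "invs n (v \<circ> sw a) = invs n v - 1" .
  have "invs n v > 0" using mem unfolding invs_def by (auto simp: card_gt_0_iff)
  with e show ?thesis by simp
qed

lemma invs_step_asc:
  assumes a: "1 \<le> a" "Suc a \<le> n" and d: "v a < v (Suc a)"
  shows "invs n (v \<circ> sw a) = invs n v + 1"
proof -
  have e: "(v \<circ> sw a) \<circ> sw a = v" by (rule ext) (simp add: transpose_def)
  have "(v \<circ> sw a) (Suc a) < (v \<circ> sw a) a" using d by (simp add: transpose_def)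
  from invs_step[OF a this] have "invs n ((v \<circ> sw a) \<circ> sw a) + 1 = invs n (v \<circ> sw a)" .
  then show ?thesis unfolding e by simp
qed

definition labels_ok :: "nat \<Rightarrow> (nat \<times> 'a) list \<Rightarrow> bool" where
  "labels_ok n ws \<longleftrightarrow> (\<forall>(a, c)\<in>set ws. 1 \<le> a \<and> Suc a \<le> n)"

lemma invs_ge_step:
  assumes "1 \<le> a" "Suc a \<le> n"
  shows "invs n v \<le> Suc (invs n (v \<circ> sw a))"
proof (cases "v (Suc a) < v a")
  case True then show ?thesis using invs_step[OF assms True] by simp
next
  case False
  show ?thesis
  proof (cases "v a < v (Suc a)")
    case True then show ?thesis using invs_step_asc[OF assms True] by simp
  next
    case False
    then have "v a = v (Suc a)" using \<open>\<not> v (Suc a) < v a\<close> by simp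
    then have "v \<circ> sw a = v" by (auto simp: fun_eq_iff transpose_def)
    then show ?thesis by simp
  qed
qed

lemma chain_zero_above:
  assumes "labels_ok n ws" "length ws < invs n v"
  shows "chain (hopsl b ws) delta v = 0"
  using assms
proof (induction ws arbitrary: v rule: rev_induct)
  case Nil
  then have "v \<noteq> id" by auto
  then show ?case by (simp add: delta_def)
next
  case (snoc p ws)
  obtain a c where p: "p = (a, c)" by (cases p)
  have lab: "labels_ok n ws" "1 \<le> a" "Suc a \<le> n" using snoc.prems by (auto simp: labels_ok_def p)
  have "length ws < invs n v" using snoc.prems by simp
  from snoc.IH[OF lab(1) this] have C0: "chain (hopsl b ws) delta v = 0" .
  have "length ws < invs n (v \<circ> sw a)"
    using snoc.prems invs_ge_step[OF lab(2,3), of v] by simp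
  from snoc.IH[OF lab(1) this] have C1: "chain (hopsl b ws) delta (v \<circ> sw a) = 0" .
  show ?case by (simp add: p hop_def Rop_def C0 C1)
qed

fun topval :: "'a::comm_ring_1 itself \<Rightarrow> perm \<Rightarrow> (nat \<times> 'a) list \<Rightarrow> 'a" where
  "topval _ v [] = delta v"
| "topval T v ((a, c) # r) = (if v (Suc a) < v a then c * topval T (v \<circ> sw a) r else 0)"

lemma chain_top:
  fixes ws :: "(nat \<times> 'a::comm_ring_1) list"
  assumes "labels_ok n ws" "length ws \<le> invs n v"
  shows "chain (hopsl b ws) delta v = topval TYPE('a) v (rev ws)"
  using assms
proof (induction ws arbitrary: v rule: rev_induct)
  case Nil then show ?case by simp
next
  case (snoc p ws)
  obtain a c where p: "p = (a, c)" by (cases p)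
  have lab: "labels_ok n ws" "1 \<le> a" "Suc a \<le> n" using snoc.prems by (auto simp: labels_ok_def p)
  have C0: "chain (hopsl b ws) delta v = 0"
    using chain_zero_above[OF lab(1)] snoc.prems by simp
  show ?case
  proof (cases "v (Suc a) < v a")
    case True
    have "length ws \<le> invs n (v \<circ> sw a)" using invs_step[OF lab(2,3) True] snoc.prems by simp
    from snoc.IH[OF lab(1) this]
    have C1: "chain (hopsl b ws) delta (v \<circ> sw a) = topval TYPE('a) (v \<circ> sw a) (rev ws)" .
    show ?thesis using True by (simp add: p hop_def Rop_def C0 C1)
  next
    case False
    then show ?thesis by (simp add: p hop_def Rop_def C0)
  qed
qed

definition shiftv :: "perm \<Rightarrow> nat \<Rightarrow> nat \<Rightarrow> perm" where
  "shiftv v r m p = (if r \<le> p \<and> p < m then v (Suc p) else if p = m then v r else v p)"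

lemma shiftv_base: "shiftv v r r = v"
  by (rule ext) (simp add: shiftv_def)

lemma shiftv_step: "r \<le> m \<Longrightarrow> shiftv v r m \<circ> sw m = shiftv v r (Suc m)"
  by (rule ext) (auto simp: shiftv_def transpose_def)

lemma peel_row:
  assumes "r \<le> m" "\<forall>j. r < j \<and> j \<le> m \<longrightarrow> v j < v r"
  shows "topval T v (map (\<lambda>a. (a, c)) [r..<m] @ rest) = c ^ (m - r) * topval T (shiftv v r m) rest"
  using assms
proof (induction m arbitrary: rest rule: dec_induct)
  case base then show ?case by (simp add: shiftv_base)
next
  case (step m)
  have "topval T v (map (\<lambda>a. (a, c)) [r..<Suc m] @ rest) = topval T v (map (\<lambda>a. (a, c)) [r..<m] @ (m, c) # rest)"
    using step.hyps by simp
  also have "\<dots> = c ^ (m - r) * topval T (shiftv v r m) ((m, c) # rest)"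
    using step.IH step.prems by simp
  also have "shiftv v r m (Suc m) < shiftv v r m m"
    using step.prems step.hyps by (simp add: shiftv_def)
  then have "topval T (shiftv v r m) ((m, c) # rest) = c * topval T (shiftv v r (Suc m)) rest"
    using shiftv_step[OF step.hyps(1)] by simp
  finally show ?case using step.hyps by (simp add: Suc_diff_le)
qed

lemma peel_inv:
  assumes "1 \<le> r" "r \<le> m" "m \<le> n" "\<forall>j. r < j \<and> j \<le> m \<longrightarrow> v j < v r"
  shows "invs n v = invs n (shiftv v r m) + (m - r)"
  using assms(2,3,4)
proof (induction m rule: dec_induct)
  case base then show ?case by (simp add: shiftv_base)
next
  case (step m)
  have d: "shiftv v r m (Suc m) < shiftv v r m m"
    using step.prems step.hyps by (simp add: shiftv_def)
  have "invs n (shiftv v r m \<circ> sw m) + 1 = invs n (shiftv v r m)"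
    by (rule invs_step[OF _ _ d]) (use assms(1) step step.prems in auto)
  then have "invs n (shiftv v r (Suc m)) + 1 = invs n (shiftv v r m)"
    using shiftv_step[OF step.hyps(1)] by simp
  then show ?case using step.IH step.prems step.hyps by simp
qed

definition Sst :: "nat \<Rightarrow> nat \<Rightarrow> perm" where
  "Sst n k p = (if 1 \<le> p \<and> p < k then Suc n - p else if k \<le> p \<and> p \<le> n then Suc p - k else p)"

definition RG :: "nat \<Rightarrow> (nat \<Rightarrow> 'a) \<Rightarrow> nat \<Rightarrow> (nat \<times> 'a) list" where
  "RG n x k = concat (map (\<lambda>r. map (\<lambda>a. (a, x r)) [r..<n]) (rev [1..<k]))"

lemma RG_Suc: "1 \<le> k \<Longrightarrow> RG n x (Suc k) = map (\<lambda>a. (a, x k)) [k..<n] @ RG n x k"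
  by (simp add: RG_def)

lemma Sst_cond: "1 \<le> k \<Longrightarrow> \<forall>j. k < j \<and> j \<le> n \<longrightarrow> Sst n (Suc k) j < Sst n (Suc k) k"
  by (auto simp: Sst_def)

lemma Sst_shift: "1 \<le> k \<Longrightarrow> k < n \<Longrightarrow> shiftv (Sst n (Suc k)) k n = Sst n k"
  by (rule ext) (auto simp: shiftv_def Sst_def)

lemma Sst_1: "Sst n 1 = id"
  by (rule ext) (simp add: Sst_def)
lemma Sst_1': "Sst n (Suc 0) = id"
  by (rule ext) (simp add: Sst_def)

lemma top_S:
  fixes x :: "nat \<Rightarrow> 'a::comm_ring_1"
  assumes "1 \<le> k" "k \<le> n"
  shows "topval TYPE('a) (Sst n k) (RG n x k) = (\<Prod>r\<in>{1..<k}. x r ^ (n - r))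
         \<and> invs n (Sst n k) = length (RG n x k)"
  using assms
proof (induction k rule: dec_induct)
  case base then show ?case by (simp add: Sst_1 Sst_1' RG_def delta_def id_def)
next
  case (step k)
  have kn: "k < n" using step by simp
  have t: "topval TYPE('a) (Sst n (Suc k)) (RG n x (Suc k))
      = x k ^ (n - k) * topval TYPE('a) (Sst n k) (RG n x k)"
    unfolding RG_Suc[OF step.hyps(1)]
    using peel_row[of k n "Sst n (Suc k)" "TYPE('a)" "x k" "RG n x k"] Sst_cond[OF step.hyps(1)] Sst_shift[OF step.hyps(1) kn] kn
    by simp
  have i: "invs n (Sst n (Suc k)) = invs n (Sst n k) + (n - k)"
    using peel_inv[of k n n "Sst n (Suc k)"] Sst_cond[OF step.hyps(1)] Sst_shift[OF step.hyps(1) kn] kn step.hyps(1)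
    by simp
  have p: "(\<Prod>r\<in>{1..<Suc k}. x r ^ (n - r)) = x k ^ (n - k) * (\<Prod>r\<in>{1..<k}. x r ^ (n - r))"
    using step.hyps(1) by (simp add: prod.atLeastLessThan_Suc mult.commute)
  show ?case using step.IH kn t i p by (simp add: RG_Suc[OF step.hyps(1)])
qed

lemma rev_Gp: "1 \<le> n \<Longrightarrow> rev (Gp n x) = RG n x n"
proof -
  assume hn: "1 \<le> n"
  have "rev (Gp n x) = concat (map (\<lambda>r. map (\<lambda>a. (a, x r)) [r..<n]) (rev [1..<Suc n]))"
    by (simp add: Gp_def rev_concat rev_map rowp_def comp_def)
  also have "rev [1..<Suc n] = n # rev [1..<n]" using hn by (simp add: upt_Suc_append)
  finally show ?thesis by (simp add: RG_def)
qed

lemma labels_ok_Gp: "labels_ok n (Gp n x)"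
  by (auto simp: labels_ok_def Gp_def rowp_def)

lemma Sst_w0: "1 \<le> n \<Longrightarrow> Sst n n = w0 n"
  by (rule ext) (auto simp: Sst_def w0_def)

lemma GG_top: "GG n (w0 n) = (\<Prod>j\<in>{1..n}. Var j ^ (n - j))"
proof (cases "n = 0")
  case True
  have "w0 0 = id" by (rule ext) (simp add: w0_def)
  then show ?thesis using True by (simp add: Gf_def Gp_def delta_def)
next
  case False
  then have n: "1 \<le> n" by simp
  have ts: "topval TYPE(mpoly) (Sst n n) (RG n Var n) = (\<Prod>r\<in>{1..<n}. Var r ^ (n - r))"
       "invs n (Sst n n) = length (RG n Var n)"
    using top_S[OF n order.refl, of Var] by auto
  have len: "length (Gp n Var) \<le> invs n (w0 n)"
    using ts(2) rev_Gp[OF n, of Var] Sst_w0[OF n] by (metis length_rev order.refl)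
  have "GG n (w0 n) = topval TYPE(mpoly) (w0 n) (rev (Gp n Var))"
    unfolding Gf_def by (rule chain_top[OF labels_ok_Gp len])
  also have "\<dots> = (\<Prod>r\<in>{1..<n}. Var r ^ (n - r))"
    using ts(1) rev_Gp[OF n, of Var] Sst_w0[OF n] by simp
  also have "\<dots> = (\<Prod>j\<in>{1..n}. Var j ^ (n - j))"
  proof -
    have "{1..n} = insert n {1..<n}" using n by auto
    then show ?thesis by simp
  qed
  finally show ?thesis .
qed

lemma groth_unique: "is_groth n w G \<Longrightarrow> G = GG n w"
proof (induction rule: is_groth.induct)
  case top then show ?case by (simp add: GG_top)
next
  case (step w i G)
  then show ?case by (metis GG_rec)
qed

lemma dec_chain:
  assumes "\<forall>i. 1 \<le> i \<and> i < n \<longrightarrow> w (Suc i) < w i" "1 \<le> p" "p \<le> q" "q \<le> n"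
  shows "w q + (q - p) \<le> w p"
  using assms(3,4)
proof (induction q rule: dec_induct)
  case base then show ?case by simp
next
  case (step q)
  have "w (Suc q) < w q" using assms(1,2) step by auto
  then show ?case using step by simp
qed

lemma no_asc_w0:
  assumes perm: "w permutes {1..n}" and na: "\<forall>i. 1 \<le> i \<and> i < n \<longrightarrow> w (Suc i) < w i"
  shows "w = w0 n"
proof (rule ext)
  fix p
  show "w p = w0 n p"
  proof (cases "p \<in> {1..n}")
    case False
    then show ?thesis using perm by (auto simp: permutes_not_in w0_def)
  next
    case True
    then have p: "1 \<le> p" "p \<le> n" by auto
    have rng: "\<And>q. q \<in> {1..n} \<Longrightarrow> w q \<in> {1..n}" using permutes_in_image[OF perm] by blast
    have a: "w n + (n - p) \<le> w p" by (rule dec_chain[OF na p(1) p(2) order.refl])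
    have b: "w p + (p - 1) \<le> w 1" by (rule dec_chain[OF na order.refl p(1) p(2)])
    have "w n \<ge> 1" using rng[of n] p by auto
    moreover have "w 1 \<le> n" using rng[of 1] p by auto
    ultimately have "w p = Suc n - p" using a b p by linarith
    then show ?thesis using True by (simp add: w0_def)
  qed
qed

lemma asc_exists:
  assumes perm: "w permutes {1..n}" and ne: "w \<noteq> w0 n"
  shows "\<exists>i. 1 \<le> i \<and> i < n \<and> w i < w (Suc i)"
proof (rule ccontr)
  assume "\<not> ?thesis"
  then have h: "\<forall>i. 1 \<le> i \<and> i < n \<longrightarrow> \<not> w i < w (Suc i)" by blast
  have "\<forall>i. 1 \<le> i \<and> i < n \<longrightarrow> w (Suc i) < w i"
  proof (intro allI impI)
    fix i assume i: "1 \<le> i \<and> i < n"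
    have "w i \<noteq> w (Suc i)"
      using perm permutes_inj[OF perm] by (metis injD n_not_Suc_n)
    then show "w (Suc i) < w i" using h i by auto
  qed
  then have "w = w0 n" by (rule no_asc_w0[OF perm])
  with ne show False by simp
qed

lemma groth_exists_aux:
  "\<forall>w. w permutes {1..n} \<and> card ({1..n} \<times> {1..n}) - invs n w = d \<longrightarrow> is_groth n w (GG n w)"
proof (induction d rule: less_induct)
  case (less d)
  show ?case
  proof (intro allI impI)
    fix w assume wd: "w permutes {1..n} \<and> card ({1..n} \<times> {1..n}) - invs n w = d"
    show "is_groth n w (GG n w)"
    proof (cases "w = w0 n")
      case True
      then show ?thesis using is_groth.top[of n] by (simp add: GG_top)
    next
      case False
      then obtain i where i: "1 \<le> i" "i < n" "w i < w (Suc i)" using asc_exists wd by blast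
      let ?w' = "w \<circ> transpose i (Suc i)"
      have p': "?w' permutes {1..n}"
        using wd i by (intro permutes_compose permutes_swap_id) auto
      have inv': "invs n ?w' = invs n w + 1"
        by (rule invs_step_asc) (use i in auto)
      have "invs n ?w' \<le> card ({1..n} \<times> {1..n})" by (rule invs_le)
      then have lt: "card ({1..n} \<times> {1..n}) - invs n ?w' < d" using wd inv' by linarith
      have "is_groth n ?w' (GG n ?w')" using less[OF lt] p' by blast
      from is_groth.step[OF this i]
      show ?thesis using GG_rec[OF i] by simp
    qed
  qed
qed

lemma groth_GG: "w permutes {1..n} \<Longrightarrow> groth n w = GG n w"
  unfolding groth_def
  by (rule the_equality) (use groth_exists_aux groth_unique in blast)+

lemma Upsilon_Gf: "w permutes {1..n} \<Longrightarrow> Upsilon n w = Gf [:0, 1:] n (\<lambda>_. 1) w"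
proof -
  assume w: "w permutes {1..n}"
  have "Upsilon n w = eval_ones (GG n w)" by (simp add: Upsilon_def groth_GG[OF w])
  also have "\<dots> = Gf (eval_ones beta) n (eval_ones \<circ> Var) w"
    by (rule hom_Gf[OF is_hom_eval_ones])
  also have "eval_ones \<circ> Var = (\<lambda>_. 1)" by (rule ext) simp
  finally show ?thesis by simp
qed

definition agree :: "(perm \<Rightarrow> 'a) \<Rightarrow> (perm \<Rightarrow> 'a) \<Rightarrow> bool" where
  "agree F G \<longleftrightarrow> (\<forall>v. bij v \<longrightarrow> F v = G v)"

lemma agree_refl[simp]: "agree F F" by (simp add: agree_def)
lemma agree_trans: "agree F G \<Longrightarrow> agree G H \<Longrightarrow> agree F H" by (simp add: agree_def)
lemma agree_sym: "agree F G \<Longrightarrow> agree G F" by (simp add: agree_def)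

definition pres :: "((perm \<Rightarrow> 'a) \<Rightarrow> (perm \<Rightarrow> 'a)) \<Rightarrow> bool" where
  "pres op \<longleftrightarrow> (\<forall>F G. agree F G \<longrightarrow> agree (op F) (op G))"

definition Lop :: "'a::comm_ring_1 \<Rightarrow> nat \<Rightarrow> (perm \<Rightarrow> 'a) \<Rightarrow> perm \<Rightarrow> 'a" where
  "Lop b a F v = (if inv v (Suc a) < inv v a then F (sw a \<circ> v) + b * F v else 0)"

definition lhop :: "'a::comm_ring_1 \<Rightarrow> nat \<Rightarrow> 'a \<Rightarrow> (perm \<Rightarrow> 'a) \<Rightarrow> perm \<Rightarrow> 'a" where
  "lhop b a c F = (\<lambda>v. F v + c * Lop b a F v)"

definition lhopsl :: "'a::comm_ring_1 \<Rightarrow> (nat \<times> 'a) list \<Rightarrow> ((perm \<Rightarrow> 'a) \<Rightarrow> (perm \<Rightarrow> 'a)) list" where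
  "lhopsl b ws = map (\<lambda>(a, c). lhop b a c) ws"

lemma lhopsl_Cons[simp]: "lhopsl b ((a, c) # ys) = lhop b a c # lhopsl b ys"
  by (simp add: lhopsl_def)
lemma lhopsl_Nil[simp]: "lhopsl b [] = []"
  by (simp add: lhopsl_def)

lemma bij_sw_r: "bij v \<Longrightarrow> bij (v \<circ> sw a)"
  by (simp add: bij_comp bij_transpose)
lemma bij_sw_l: "bij v \<Longrightarrow> bij (sw a \<circ> v)"
  by (simp add: bij_comp bij_transpose)

lemma pres_hop: "pres (hop b a c)"
  unfolding pres_def agree_def hop_def Rop_def by (auto simp: bij_sw_r)
lemma pres_lhop: "pres (lhop b a c)"
  unfolding pres_def agree_def lhop_def Lop_def by (auto simp: bij_sw_l)

lemma chain_pres: "\<forall>op\<in>set ops. pres op \<Longrightarrow> agree F G \<Longrightarrow> agree (chain ops F) (chain ops G)"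
proof (induction ops arbitrary: F G)
  case Nil then show ?case by simp
next
  case (Cons op ops)
  then have "agree (op F) (op G)" by (simp add: pres_def)
  then show ?case using Cons by simp
qed

lemma pres_hopsl: "\<forall>op\<in>set (hopsl b ws). pres op"
  by (auto simp: hopsl_def pres_hop)
lemma pres_lhopsl: "\<forall>op\<in>set (lhopsl b ws). pres op"
  by (auto simp: lhopsl_def pres_lhop)

lemma inv_comp_sw: "bij v \<Longrightarrow> inv (sw a \<circ> v) = inv v \<circ> sw a"
  by (simp add: o_inv_distrib bij_transpose inv_transpose_eq)

lemma Rop_inv: "bij v \<Longrightarrow> Rop b a F (inv v) = Lop b a (F \<circ> inv) v"
  by (simp add: Rop_def Lop_def inv_comp_sw)

lemma hop_inv: "agree (hop b a c F \<circ> inv) (lhop b a c (F \<circ> inv))"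
  unfolding agree_def by (simp add: hop_def lhop_def Rop_inv)

lemma chain_inv: "agree (chain (hopsl b ws) F \<circ> inv) (chain (lhopsl b ws) (F \<circ> inv))"
proof (induction ws arbitrary: F)
  case Nil then show ?case by simp
next
  case (Cons p ws)
  obtain a c where p: "p = (a, c)" by (cases p)
  have "agree (chain (hopsl b ws) (hop b a c F) \<circ> inv) (chain (lhopsl b ws) (hop b a c F \<circ> inv))"
    by (rule Cons.IH)
  moreover have "agree (chain (lhopsl b ws) (hop b a c F \<circ> inv)) (chain (lhopsl b ws) (lhop b a c (F \<circ> inv)))"
    by (rule chain_pres[OF pres_lhopsl hop_inv])
  ultimately have A: "agree (chain (hopsl b ws) (hop b a c F) \<circ> inv) (chain (lhopsl b ws) (lhop b a c (F \<circ> inv)))"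
    by (rule agree_trans)
  have e1: "chain (hopsl b (p # ws)) F = chain (hopsl b ws) (hop b a c F)" by (simp add: p)
  have e2: "chain (lhopsl b (p # ws)) (F \<circ> inv) = chain (lhopsl b ws) (lhop b a c (F \<circ> inv))" by (simp add: p)
  show ?case unfolding e1 e2 by (rule A)
qed

lemma delta_inv: "agree (delta \<circ> inv) delta"
  unfolding agree_def
proof (intro allI impI)
  fix v :: perm assume v: "bij v"
  have "inv v = id \<longleftrightarrow> v = id"
    by (metis inv_id inv_inv_eq v)
  then show "(delta \<circ> inv) v = delta v" by (simp add: delta_def)
qed

lemma sw_order:
  assumes "x \<noteq> y" "\<not> (x = a \<and> y = Suc a)" "\<not> (x = Suc a \<and> y = a)"
  shows "(sw a x < sw a y) \<longleftrightarrow> (x < y)"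
  using assms by (auto simp: transpose_def)

lemma inv_comp_sw_r: "bij v \<Longrightarrow> inv (v \<circ> sw c) = sw c \<circ> inv v"
  by (simp add: o_inv_distrib bij_transpose inv_transpose_eq)

lemma Lop_Rop_comm:
  assumes v: "bij v"
  shows "Lop b a (Rop b c F) v = Rop b c (Lop b a F) v"
proof -
  have iv: "\<And>y. v (inv v y) = y" using v by (simp add: bij_is_surj surj_f_inv_f)
  have vi: "\<And>y. inv v (v y) = y" using v by (simp add: bij_is_inj inv_f_f)
  have injv: "\<And>x y. v x = v y \<longleftrightarrow> x = y" using v by (metis vi)
  have ic: "inv (v \<circ> sw c) = sw c \<circ> inv v" by (rule inv_comp_sw_r[OF v])
  show ?thesis
  proof (cases "v c = Suc a \<and> v (Suc c) = a")
    case True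
    have e: "sw a \<circ> v = v \<circ> sw c"
    proof (rule ext)
      fix p show "(sw a \<circ> v) p = (v \<circ> sw c) p"
        using True injv[of p c] injv[of p "Suc c"] by (auto simp: transpose_def)
    qed
    have i1: "inv v a = Suc c" "inv v (Suc a) = c" using True vi by metis+
    have r1: "\<not> (sw a \<circ> v) (Suc c) < (sw a \<circ> v) c" using True by (simp add: transpose_def)
    have l1: "\<not> inv (v \<circ> sw c) (Suc a) < inv (v \<circ> sw c) a" using i1 by (simp add: ic transpose_def)
    show ?thesis
      unfolding Lop_def Rop_def using True i1 r1 l1 by (simp add: e)
  next
    case F1: False
    show ?thesis
    proof (cases "v c = a \<and> v (Suc c) = Suc a")
      case True
      have i1: "inv v a = c" "inv v (Suc a) = Suc c" using True vi by metis+
      show ?thesis unfolding Lop_def Rop_def using True i1 by simp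
    next
      case F2: False
      have ne: "v (Suc c) \<noteq> v c" using injv by simp
      have r: "((sw a \<circ> v) (Suc c) < (sw a \<circ> v) c) \<longleftrightarrow> (v (Suc c) < v c)"
        using sw_order[OF ne] F1 F2 by auto
      have ne2: "inv v (Suc a) \<noteq> inv v a" using iv by (metis n_not_Suc_n)
      have l: "(inv (v \<circ> sw c) (Suc a) < inv (v \<circ> sw c) a) \<longleftrightarrow> (inv v (Suc a) < inv v a)"
        unfolding ic comp_apply
      proof (rule sw_order[OF ne2])
        show "\<not> (inv v (Suc a) = c \<and> inv v a = Suc c)" using F1 iv by metis
        show "\<not> (inv v (Suc a) = Suc c \<and> inv v a = c)" using F2 iv by metis
      qed
      have assoc: "sw a \<circ> (v \<circ> sw c) = sw a \<circ> v \<circ> sw c" by (simp add: comp_assoc)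
      show ?thesis
        unfolding Lop_def Rop_def r l assoc by (simp add: algebra_simps)
    qed
  qed
qed

lemma Lop_delta:
  assumes v: "bij v"
  shows "Lop b a delta v = Rop b a delta v"
proof -
  have vi: "\<And>y. inv v (v y) = y" using v by (simp add: bij_is_inj inv_f_f)
  consider "v = id" | "v = sw a" | "v \<noteq> id" "v \<noteq> sw a" by blast
  then show ?thesis
  proof cases
    case 1 then show ?thesis by (simp add: Lop_def Rop_def)
  next
    case 2
    have "sw a \<circ> sw a = id" by simp
    then show ?thesis using 2 by (simp add: Lop_def Rop_def inv_transpose_eq delta_def transpose_def)
  next
    case 3
    have a1: "sw a \<circ> v \<noteq> id"
    proof
      assume "sw a \<circ> v = id"
      then have "sw a \<circ> (sw a \<circ> v) = sw a" by simp
      then show False using 3 by simp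
    qed
    have a2: "v \<circ> sw a \<noteq> id"
    proof
      assume "v \<circ> sw a = id"
      then have "(v \<circ> sw a) \<circ> sw a = sw a" by simp
      then have "v = sw a" by (simp add: comp_assoc)
      then show False using 3 by simp
    qed
    show ?thesis using 3 a1 a2 by (simp add: Lop_def Rop_def delta_def)
  qed
qed

lemma Lop_add: "Lop b a (\<lambda>v. F v + G v) w = Lop b a F w + Lop b a G w"
  by (simp add: Lop_def algebra_simps)
lemma Lop_smult: "Lop b a (\<lambda>v. c * F v) w = c * Lop b a F w"
  by (simp add: Lop_def algebra_simps)

lemma lhop_hop_comm: "agree (lhop b a c (hop b a' c' F)) (hop b a' c' (lhop b a c F))"
  unfolding agree_def
proof (intro allI impI)
  fix v :: perm assume v: "bij v"
  show "lhop b a c (hop b a' c' F) v = hop b a' c' (lhop b a c F) v"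
    unfolding lhop_def hop_def
    by (simp only: Lop_add Lop_smult Rop_add Rop_smult Lop_Rop_comm[OF v]) (simp add: algebra_simps)
qed

lemma chainL_hop: "agree (chain (lhopsl b ws) (hop b a c G)) (hop b a c (chain (lhopsl b ws) G))"
proof (induction ws arbitrary: G)
  case Nil then show ?case by simp
next
  case (Cons p ws)
  obtain a' c' where p: "p = (a', c')" by (cases p)
  have "agree (chain (lhopsl b ws) (lhop b a' c' (hop b a c G))) (chain (lhopsl b ws) (hop b a c (lhop b a' c' G)))"
    by (rule chain_pres[OF pres_lhopsl lhop_hop_comm])
  moreover have "agree (chain (lhopsl b ws) (hop b a c (lhop b a' c' G))) (hop b a c (chain (lhopsl b ws) (lhop b a' c' G)))"
    by (rule Cons.IH)
  ultimately show ?case by (simp add: p agree_trans)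
qed

lemma chainL_rev: "agree (chain (lhopsl b ws) delta) (chain (hopsl b (rev ws)) delta)"
proof (induction ws)
  case Nil then show ?case by simp
next
  case (Cons p ws)
  obtain a c where p: "p = (a, c)" by (cases p)
  have d: "agree (lhop b a c delta) (hop b a c delta)"
    unfolding agree_def lhop_def hop_def by (simp add: Lop_delta)
  have "agree (chain (lhopsl b ws) (lhop b a c delta)) (chain (lhopsl b ws) (hop b a c delta))"
    by (rule chain_pres[OF pres_lhopsl d])
  moreover have "agree (chain (lhopsl b ws) (hop b a c delta)) (hop b a c (chain (lhopsl b ws) delta))"
    by (rule chainL_hop)
  moreover have "agree (hop b a c (chain (lhopsl b ws) delta)) (hop b a c (chain (hopsl b (rev ws)) delta))"
    using Cons.IH pres_hop[of b a c] unfolding pres_def by blast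
  ultimately show ?case by (simp add: p agree_trans)
qed

definition HL :: "'a::comm_ring_1 \<Rightarrow> 'a \<Rightarrow> nat list \<Rightarrow> ((perm \<Rightarrow> 'a) \<Rightarrow> (perm \<Rightarrow> 'a)) list" where
  "HL b c L = map (\<lambda>a. hop b a c) L"

lemma HL_append[simp]: "HL b c (xs @ ys) = HL b c xs @ HL b c ys"
  by (simp add: HL_def)
lemma HL_Cons[simp]: "HL b c (x # ys) = hop b x c # HL b c ys"
  by (simp add: HL_def)
lemma HL_Nil[simp]: "HL b c [] = []"
  by (simp add: HL_def)

definition Dw :: "nat \<Rightarrow> nat \<Rightarrow> nat \<Rightarrow> nat list" where
  "Dw n k j = concat (map (\<lambda>r. [r..<n]) (rev [k..<j]))"

lemma Dw_Suc: "k \<le> j \<Longrightarrow> Dw n k (Suc j) = [j..<n] @ Dw n k j"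
  by (simp add: Dw_def)

lemma Dw_empty: "Dw n k k = []"
  by (simp add: Dw_def)

lemma far_blocks:
  "\<forall>o1\<in>set (HL b c (rev [k..<j])). \<forall>o2\<in>set (HL b c [Suc j..<n]). commute o2 o1"
  by (auto simp: HL_def intro!: hop_far)

lemma reorder_M:
  assumes "k \<le> j" "j \<le> n"
  shows "chain (HL b c (rev [k..<j] @ Dw n (Suc k) (Suc j))) F = chain (HL b c (Dw n k j)) F"
  using assms
proof (induction j arbitrary: F rule: dec_induct)
  case base then show ?case by (simp add: Dw_empty)
next
  case (step j)
  have jn: "j < n" using step by simp
  let ?D = "Dw n (Suc k) (Suc j)"
  have l1: "rev [k..<Suc j] = j # rev [k..<j]" using step.hyps by simp
  have l2: "Dw n (Suc k) (Suc (Suc j)) = [Suc j..<n] @ ?D" using step.hyps by (simp add: Dw_Suc)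
  have "chain (HL b c (rev [k..<Suc j] @ Dw n (Suc k) (Suc (Suc j)))) F
      = chain (HL b c ?D) (chain (HL b c (rev [k..<j]) @ HL b c [Suc j..<n]) (hop b j c F))"
    unfolding l1 l2 by simp
  also have "chain (HL b c (rev [k..<j]) @ HL b c [Suc j..<n]) (hop b j c F)
      = chain (HL b c [Suc j..<n] @ HL b c (rev [k..<j])) (hop b j c F)"
    by (rule chain_blocks_commute[OF far_blocks])
  also have "chain (HL b c ?D) (chain (HL b c [Suc j..<n] @ HL b c (rev [k..<j])) (hop b j c F))
      = chain (HL b c (rev [k..<j] @ ?D)) (chain (HL b c [Suc j..<n]) (hop b j c F))"
    by simp
  also have "\<dots> = chain (HL b c (Dw n k j)) (chain (HL b c [Suc j..<n]) (hop b j c F))"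
    using step.IH step.prems by simp
  also have "\<dots> = chain (HL b c (Dw n k (Suc j))) F"
  proof -
    have "[j..<n] = j # [Suc j..<n]" using jn by (simp add: upt_conv_Cons)
    then show ?thesis using step.hyps by (simp add: Dw_Suc)
  qed
  finally show ?case .
qed

definition Rw :: "nat \<Rightarrow> nat \<Rightarrow> nat list" where
  "Rw n k = concat (map (\<lambda>r. rev [r..<n]) [k..<Suc n])"

lemma reorder_rows:
  assumes "k \<le> Suc n"
  shows "chain (HL b c (Rw n k)) F = chain (HL b c (Dw n k (Suc n))) F"
  using assms
proof (induction k arbitrary: F rule: inc_induct)
  case base then show ?case by (simp add: Rw_def Dw_def)
next
  case (step k)
  have kn: "k \<le> n" using step by simp
  have r: "Rw n k = rev [k..<n] @ Rw n (Suc k)"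
    using step.hyps by (simp add: Rw_def upt_conv_Cons)
  have d: "Dw n k (Suc n) = Dw n k n"
    using kn by (simp add: Dw_Suc)
  have "chain (HL b c (Rw n k)) F = chain (HL b c (Rw n (Suc k))) (chain (HL b c (rev [k..<n])) F)"
    by (simp add: r)
  also have "\<dots> = chain (HL b c (Dw n (Suc k) (Suc n))) (chain (HL b c (rev [k..<n])) F)"
    by (rule step.IH)
  also have "\<dots> = chain (HL b c (rev [k..<n] @ Dw n (Suc k) (Suc n))) F" by simp
  also have "\<dots> = chain (HL b c (Dw n k n)) F" by (rule reorder_M[OF kn order.refl])
  finally show ?case using d by simp
qed

lemma rowp_const: "rowp n (\<lambda>_. c) = (\<lambda>r. map (\<lambda>a. (a, c)) (rev [r..<n]))"
  by (rule ext) (simp add: rowp_def)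

lemma Gp_const: "Gp n (\<lambda>_. c) = map (\<lambda>a. (a, c)) (Rw n 1)"
  by (simp add: Gp_def rowp_const Rw_def map_concat comp_def)

lemma hopsl_map: "hopsl b (map (\<lambda>a. (a, c)) L) = HL b c L"
  by (simp add: hopsl_def HL_def)

lemma rev_Rw: "rev (Rw n 1) = Dw n 1 (Suc n)"
  by (simp add: Rw_def Dw_def rev_concat rev_map comp_def)

lemma Gf_rev: "chain (hopsl b (rev (Gp n (\<lambda>_. c)))) F = chain (hopsl b (Gp n (\<lambda>_. c))) F"
  unfolding Gp_const rev_map hopsl_map rev_Rw
  by (rule reorder_rows[symmetric]) simp

lemma Gf_sym:
  assumes w: "bij w"
  shows "Gf b n (\<lambda>_. c) (inv w) = Gf b n (\<lambda>_. c) w"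
proof -
  let ?W = "Gp n (\<lambda>_. c)"
  have "agree (chain (hopsl b ?W) delta \<circ> inv) (chain (lhopsl b ?W) (delta \<circ> inv))"
    by (rule chain_inv)
  moreover have "agree (chain (lhopsl b ?W) (delta \<circ> inv)) (chain (lhopsl b ?W) delta)"
    by (rule chain_pres[OF pres_lhopsl delta_inv])
  moreover have "agree (chain (lhopsl b ?W) delta) (chain (hopsl b (rev ?W)) delta)"
    by (rule chainL_rev)
  ultimately have "agree (chain (hopsl b ?W) delta \<circ> inv) (chain (hopsl b (rev ?W)) delta)"
    by (meson agree_trans)
  then have "(chain (hopsl b ?W) delta \<circ> inv) w = chain (hopsl b (rev ?W)) delta w"
    using w by (simp add: agree_def)
  then show ?thesis by (simp add: Gf_def Gf_rev)
qed

theorem proposition2p3: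
  fixes n :: nat and w :: "nat \<Rightarrow> nat"
  assumes "w permutes {1..n}"
  shows "Upsilon n w = Upsilon n (inv w)"
proof -
  have wi: "inv w permutes {1..n}" by (rule permutes_inv[OF assms])
  have b: "bij w" by (rule permutes_bij[OF assms])
  show ?thesis
    unfolding Upsilon_Gf[OF assms] Upsilon_Gf[OF wi] Gf_sym[OF b] ..
qed

end
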